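(* Let $\Sigma$ be a non-empty finite or countably infinite alphabet, $p$ a positive Bernoulli distribution on $\Sigma$, and $A=(Q,\Sigma,\delta,q_s,F)$ a strongly connected DFA with $F\ne\emptyset$. Then there is a real number $b$ with $0<b\le1$ such that for all $\epsilon>0$, $\lim_{n\to\infty}\mu_p(D_n^p(b,\epsilon))=1$.
   Context: $p:\Sigma\to(0,1]$ with $\sum_ap(a)=1$; $\mu_p(a_1\cdots a_n)=\prod_ip(a_i)$, $\mu_p(W)=\sum_{w\in W}\mu_p(w)$. $A_q$ is $A$ with start state $q$; for $w=w_1\cdots w_n$, $A_q[w]$ is the subsequence of those $w_i$ with $\delta^*(q,w_1\cdots w_{i-1})\in F$; $\#_a(v)$ counts occurrences of $a$ in $v$. Define $D_n^p(b,\epsilon,q)=\{w\in\Sigma^n: |A_q[w]|>bn\ \text{and}\ \sup_{a\in\Sigma}|\#_a(A_q[w])/|A_q[w]|-p(a)|<\epsilon\}$ and $D_n^p(b,\epsilon)=\bigcap_{q\in Q}D_n^p(b,\epsilon,q)$. $A$ is strongly connected if its underlying directed graph is strongly connected. *)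

theory Defs
  imports "HOL-Analysis.Analysis"
begin

fun dfa_run :: "('q \<Rightarrow> 'a \<Rightarrow> 'q) \<Rightarrow> 'q \<Rightarrow> 'a list \<Rightarrow> 'q" where
  "dfa_run \<delta> q [] = q"
| "dfa_run \<delta> q (a # w) = dfa_run \<delta> (\<delta> q a) w"

fun sel_sub :: "('q \<Rightarrow> 'a \<Rightarrow> 'q) \<Rightarrow> 'q set \<Rightarrow> 'q \<Rightarrow> 'a list \<Rightarrow> 'a list" where
  "sel_sub \<delta> F q [] = []"
| "sel_sub \<delta> F q (a # w) = (if q \<in> F then [a] else []) @ sel_sub \<delta> F (\<delta> q a) w"

definition mu_p :: "('a \<Rightarrow> real) \<Rightarrow> 'a list set \<Rightarrow> real" where
  "mu_p p W = (\<Sum>\<^sub>\<infinity>w\<in>W. prod_list (map p w))"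

definition strongly_connected ::
  "'q set \<Rightarrow> 'a set \<Rightarrow> ('q \<Rightarrow> 'a \<Rightarrow> 'q) \<Rightarrow> bool" where
  "strongly_connected Q \<Sigma> \<delta> \<longleftrightarrow>
     (\<forall>q\<in>Q. \<forall>q'\<in>Q. (q, q') \<in> {(r, \<delta> r a) | r a. r \<in> Q \<and> a \<in> \<Sigma>}\<^sup>*)"

definition D_q ::
  "'a set \<Rightarrow> ('a \<Rightarrow> real) \<Rightarrow> ('q \<Rightarrow> 'a \<Rightarrow> 'q) \<Rightarrow> 'q set \<Rightarrow> nat \<Rightarrow> real \<Rightarrow> real \<Rightarrow> 'q \<Rightarrow> 'a list set" where
  "D_q \<Sigma> p \<delta> F n b \<epsilon> q =
     {w. set w \<subseteq> \<Sigma> \<and> length w = n \<and>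
         real (length (sel_sub \<delta> F q w)) > b * real n \<and>
         (SUP a\<in>\<Sigma>. \<bar>real (count_list (sel_sub \<delta> F q w) a) / real (length (sel_sub \<delta> F q w)) - p a\<bar>) < \<epsilon>}"

definition D ::
  "'a set \<Rightarrow> ('a \<Rightarrow> real) \<Rightarrow> 'q set \<Rightarrow> ('q \<Rightarrow> 'a \<Rightarrow> 'q) \<Rightarrow> 'q set \<Rightarrow> nat \<Rightarrow> real \<Rightarrow> real \<Rightarrow> 'a list set" where
  "D \<Sigma> p Q \<delta> F n b \<epsilon> = {w. set w \<subseteq> \<Sigma> \<and> length w = n} \<inter> (\<Inter>q\<in>Q. D_q \<Sigma> p \<delta> F n b \<epsilon> q)"

end

theory Submission
  imports Defs "HOL-Probability.Probability"
begin


lemma integral_bind_pmf_bdd: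
  fixes f :: "'b \<Rightarrow> real"
  assumes "\<And>y. y \<in> set_pmf (bind_pmf M N) \<Longrightarrow> \<bar>f y\<bar> \<le> B"
  shows "measure_pmf.expectation (bind_pmf M N) f = measure_pmf.expectation M (\<lambda>x. measure_pmf.expectation (N x) f)"
proof -
  define g where "g y = (if y \<in> set_pmf (bind_pmf M N) then f y else 0)" for y
  have gb: "\<bar>g y\<bar> \<le> \<bar>B\<bar>" for y using assms unfolding g_def by (auto, fastforce)
  have "measure_pmf.expectation (bind_pmf M N) f = measure_pmf.expectation (bind_pmf M N) g"
    by (intro integral_cong_AE) (auto simp: g_def AE_measure_pmf_iff)
  also have "\<dots> = measure_pmf.expectation M (\<lambda>x. measure_pmf.expectation (N x) g)"
    unfolding measure_pmf_bind
    by (rule integral_bind[where K="count_space UNIV" and B="\<bar>B\<bar>" and B'=1]) (auto simp: gb space_subprob_algebra measure_pmf.emeasure_space_1 prob_space_imp_subprob_space prob_space_measure_pmf intro!: measurable_count_space_eq1[THEN iffD2] prob_space.finite_measure)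
  also have "\<dots> = measure_pmf.expectation M (\<lambda>x. measure_pmf.expectation (N x) f)"
    by (intro integral_cong_AE) (auto simp: g_def AE_measure_pmf_iff intro!: integral_cong_AE)
  finally show ?thesis .
qed

lemma pmf_integrable_bdd:
  fixes f :: "'b \<Rightarrow> real"
  assumes "\<And>x. x \<in> set_pmf M \<Longrightarrow> \<bar>f x\<bar> \<le> B"
  shows "integrable (measure_pmf M) f"
  by (rule measure_pmf.integrable_const_bound[where B=B]) (auto simp: AE_measure_pmf_iff assms)

lemma pmf_expectation_le:
  fixes f :: "'b \<Rightarrow> real"
  assumes "\<And>x. x \<in> set_pmf M \<Longrightarrow> f x \<le> c" "\<And>x. x \<in> set_pmf M \<Longrightarrow> \<bar>f x\<bar> \<le> B"
  shows "measure_pmf.expectation M f \<le> c"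
proof -
  have "measure_pmf.expectation M f \<le> measure_pmf.expectation M (\<lambda>_. c)"
    by (intro integral_mono_AE pmf_integrable_bdd[OF assms(2)]) (auto simp: AE_measure_pmf_iff assms(1))
  thus ?thesis by simp
qed

lemma pmf_expectation_ge:
  fixes f :: "'b \<Rightarrow> real"
  assumes "\<And>x. x \<in> set_pmf M \<Longrightarrow> c \<le> f x" "\<And>x. x \<in> set_pmf M \<Longrightarrow> \<bar>f x\<bar> \<le> B"
  shows "c \<le> measure_pmf.expectation M f"
proof -
  have "measure_pmf.expectation M (\<lambda>_. c) \<le> measure_pmf.expectation M f"
    by (intro integral_mono_AE pmf_integrable_bdd[OF assms(2)]) (auto simp: AE_measure_pmf_iff assms(1))
  thus ?thesis by simp
qed

lemma pmf_chebyshev: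
  fixes f :: "'b \<Rightarrow> real"
  assumes "\<And>x. x \<in> set_pmf M \<Longrightarrow> \<bar>f x\<bar> \<le> B" "c > 0"
  shows "measure_pmf.prob M {x. \<bar>f x\<bar> \<ge> c} \<le> measure_pmf.expectation M (\<lambda>x. (f x)^2) / c^2"
proof -
  have "\<bar>(f x)^2\<bar> \<le> B^2" if "x \<in> set_pmf M" for x
  proof -
    have "\<bar>f x\<bar>^2 \<le> B^2" using assms(1)[OF that] by (intro power_mono) auto
    thus ?thesis by simp
  qed
  hence int: "integrable (measure_pmf M) (\<lambda>x. (f x)^2)" by (rule pmf_integrable_bdd)
  have "{x. \<bar>f x\<bar> \<ge> c} = {x \<in> space (measure_pmf M). (f x)^2 \<ge> c^2}"
  proof -
    have "c \<le> \<bar>y\<bar> \<longleftrightarrow> c^2 \<le> y^2" for y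
      using assms(2) by (metis abs_le_square_iff abs_of_pos)
    thus ?thesis by auto
  qed
  moreover have "measure_pmf.prob M {x \<in> space (measure_pmf M). (f x)^2 \<ge> c^2} \<le> measure_pmf.expectation M (\<lambda>x. (f x)^2) / c^2"
    by (rule integral_Markov_inequality_measure[OF int, where A=UNIV]) (use assms(2) in auto)
  ultimately show ?thesis by simp
qed

lemma sum_count_list_le: "finite T \<Longrightarrow> (\<Sum>c\<in>T. count_list l c) \<le> length l"
proof (induction l)
  case Nil thus ?case by simp
next
  case (Cons x l)
  have "(\<Sum>c\<in>T. count_list (x#l) c) = (\<Sum>c\<in>T. count_list l c) + (\<Sum>c\<in>T. if x = c then 1 else 0)"
    by (auto simp: sum.distrib[symmetric] intro!: sum.cong)
  also have "(\<Sum>c\<in>T. if x = c then 1 else (0::nat)) \<le> 1"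
    using Cons.prems by (simp add: sum.If_cases Int_def)
  finally show ?case using Cons by simp
qed




locale aut =
  fixes \<Sigma> :: "'a set" and p :: "'a \<Rightarrow> real" and Q :: "'q set" and \<delta> :: "'q \<Rightarrow> 'a \<Rightarrow> 'q" and F :: "'q set"
  assumes pos: "\<forall>a\<in>\<Sigma>. 0 < p a \<and> p a \<le> 1" and hs: "(p has_sum 1) \<Sigma>" and finQ: "finite Q"
   and clos: "\<forall>q\<in>Q. \<forall>a\<in>\<Sigma>. \<delta> q a \<in> Q" and FQ: "F \<subseteq> Q"
begin

definition pp where "pp a = (if a \<in> \<Sigma> then p a else 0)"

lemma pp_nonneg: "0 \<le> pp a" using pos by (auto simp: pp_def less_imp_le)

lemma pp_has_sum: "(pp has_sum 1) UNIV"
  using hs by (subst has_sum_cong_neutral[where g=p and T=\<Sigma>]) (auto simp: pp_def)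

lemma pp_nn: "(\<integral>\<^sup>+x. ennreal (pp x) \<partial>count_space UNIV) = 1"
proof -
  have s: "pp summable_on UNIV" "infsum pp UNIV = 1" using pp_has_sum by (auto simp: has_sum_iff)
  have "Infinite_Sum.abs_summable_on pp UNIV"
    using s(1) pp_nonneg by (simp add: abs_of_nonneg)
  hence a: "Infinite_Set_Sum.abs_summable_on pp UNIV" using abs_summable_equivalent by blast
  have "(\<integral>\<^sup>+x. ennreal (pp x) \<partial>count_space UNIV) = ennreal (infsetsum pp UNIV)"
    by (rule nn_integral_conv_infsetsum[OF a]) (simp add: pp_nonneg)
  also have "infsetsum pp UNIV = 1" using infsetsum_infsum[OF a] s(2) by simp
  finally show ?thesis by simp
qed

definition L :: "'a pmf" where "L = embed_pmf pp"

lemma pmf_L: "pmf L a = pp a"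
  unfolding L_def by (rule pmf_embed_pmf[OF pp_nonneg pp_nn])

lemma set_L: "set_pmf L = \<Sigma>"
  unfolding L_def using pos by (subst set_embed_pmf[OF pp_nonneg pp_nn]) (auto simp: pp_def)

primrec W :: "nat \<Rightarrow> 'a list pmf" where
  "W 0 = return_pmf []"
| "W (Suc n) = bind_pmf L (\<lambda>a. map_pmf (Cons a) (W n))"

lemma set_W: "set_pmf (W n) \<subseteq> {w. length w = n \<and> set w \<subseteq> \<Sigma>}"
  by (induction n) (force simp: set_L)+

lemma set_WD: "w \<in> set_pmf (W n) \<Longrightarrow> length w = n \<and> set w \<subseteq> \<Sigma>"
  using set_W by blast

lemma pmf_map_Cons: "pmf (map_pmf (Cons b) M) (a # w) = (if b = a then pmf M w else 0)"
proof (cases "b = a")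
  case True thus ?thesis by (simp add: pmf_map_inj' inj_on_def)
next
  case False thus ?thesis by (auto intro!: pmf_map_outside)
qed

lemma integral_L_single: "measure_pmf.expectation L (\<lambda>b. if b = a then c else 0) = pmf L a * c"
proof -
  have "(\<lambda>b. if b = a then c else 0) = (\<lambda>b. c * indicator {a} b)" by (auto simp: indicator_def)
  hence "measure_pmf.expectation L (\<lambda>b. if b = a then c else 0) = c * measure_pmf.prob L {a}"
    by simp
  thus ?thesis by (simp add: measure_pmf_single)
qed

lemma pmf_W: "pmf (W n) w = (if length w = n \<and> set w \<subseteq> \<Sigma> then prod_list (map p w) else 0)"
proof (induction n arbitrary: w)
  case 0 thus ?case by (cases w) auto
next
  case (Suc n)
  show ?case
  proof (cases w)
    case Nil
    have "\<And>x. pmf (map_pmf (Cons x) (W n)) [] = 0" by (rule pmf_map_outside) auto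
    thus ?thesis using Nil by (simp add: pmf_bind)
  next
    case (Cons a w')
    have "pmf (W (Suc n)) w = measure_pmf.expectation L (\<lambda>b. if b = a then pmf (W n) w' else 0)"
      by (simp add: Cons pmf_bind pmf_map_Cons)
    also have "\<dots> = pp a * pmf (W n) w'" by (simp add: integral_L_single pmf_L)
    finally show ?thesis using Suc by (auto simp: Cons pp_def)
  qed
qed

lemma E_W_Suc:
  fixes f :: "'a list \<Rightarrow> real"
  assumes "\<And>w. w \<in> set_pmf (W (Suc n)) \<Longrightarrow> \<bar>f w\<bar> \<le> B"
  shows "measure_pmf.expectation (W (Suc n)) f = measure_pmf.expectation L (\<lambda>a. measure_pmf.expectation (W n) (\<lambda>w. f (a#w)))"
  using assms unfolding W.simps by (subst integral_bind_pmf_bdd[where B=B]) auto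

lemma mu_p_W:
  assumes "X \<subseteq> {w. length w = n \<and> set w \<subseteq> \<Sigma>}"
  shows "mu_p p X = measure_pmf.prob (W n) X"
proof -
  have "mu_p p X = infsum (pmf (W n)) X"
    unfolding mu_p_def using assms by (intro infsum_cong) (auto simp: pmf_W)
  also have "\<dots> = infsetsum (pmf (W n)) X"
    by (rule infsetsum_infsum[symmetric]) (rule pmf_abs_summable)
  also have "\<dots> = measure_pmf.prob (W n) X" by (simp add: measure_pmf_conv_infsetsum)
  finally show ?thesis .
qed

end



lemma pmf_expectation_abs_le:
  fixes f :: "'b \<Rightarrow> real"
  assumes "\<And>x. x \<in> set_pmf M \<Longrightarrow> \<bar>f x\<bar> \<le> B"
  shows "\<bar>measure_pmf.expectation M f\<bar> \<le> B"
proof -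
  have "measure_pmf.expectation M f \<le> B"
    by (rule pmf_expectation_le[where B=B]) (use assms in \<open>auto simp: abs_le_iff\<close>)
  moreover have "-B \<le> measure_pmf.expectation M f"
  proof (rule pmf_expectation_ge[where B=B])
    fix x assume "x \<in> set_pmf M"
    from assms[OF this] show "-B \<le> f x" by linarith
  qed (rule assms)
  ultimately show ?thesis by auto
qed

context aut begin

fun Sf :: "('q \<Rightarrow> 'a \<Rightarrow> real) \<Rightarrow> 'q \<Rightarrow> 'a list \<Rightarrow> real" where
  "Sf h q [] = 0"
| "Sf h q (a # w) = h q a + Sf h (\<delta> q a) w"

lemma run_in_Q: "q \<in> Q \<Longrightarrow> set w \<subseteq> \<Sigma> \<Longrightarrow> dfa_run \<delta> q w \<in> Q"
  by (induction w arbitrary: q) (auto simp: clos)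

lemma Sf_bound:
  assumes hb: "\<forall>s\<in>Q. \<forall>a\<in>\<Sigma>. \<bar>h s a\<bar> \<le> B"
  shows "q \<in> Q \<Longrightarrow> set w \<subseteq> \<Sigma> \<Longrightarrow> \<bar>Sf h q w\<bar> \<le> B * length w"
proof (induction w arbitrary: q)
  case Nil thus ?case by simp
next
  case (Cons a w)
  have "\<bar>h q a\<bar> \<le> B" using hb Cons.prems by auto
  moreover have "\<bar>Sf h (\<delta> q a) w\<bar> \<le> B * length w" using Cons clos by auto
  ultimately show ?case by (simp add: algebra_simps)
qed

lemma Sf_moments:
  assumes hb: "\<forall>s\<in>Q. \<forall>a\<in>\<Sigma>. \<bar>h s a\<bar> \<le> B" and h0: "\<forall>s\<in>Q. measure_pmf.expectation L (h s) = 0"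
   and B0: "0 \<le> B"
  shows "q \<in> Q \<Longrightarrow> measure_pmf.expectation (W n) (Sf h q) = 0 \<and>
     measure_pmf.expectation (W n) (\<lambda>w. (Sf h q w)^2) \<le> B^2 * n"
proof (induction n arbitrary: q)
  case 0 thus ?case by simp
next
  case (Suc n)
  have bdW: "\<bar>Sf h r w\<bar> \<le> B * m" if "r \<in> Q" "w \<in> set_pmf (W m)" for r w m
    using Sf_bound[OF hb that(1), of w] set_WD[OF that(2)] by auto
  have bdW2: "\<bar>(Sf h r w)^2\<bar> \<le> (B * m)^2" if "r \<in> Q" "w \<in> set_pmf (W m)" for r w m
  proof -
    have "\<bar>Sf h r w\<bar>^2 \<le> (B * m)^2" using bdW[OF that] by (intro power_mono) auto
    thus ?thesis by simp
  qed
  have step: "measure_pmf.expectation (W n) (\<lambda>w. h q a + Sf h (\<delta> q a) w) = h q a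
     \<and> measure_pmf.expectation (W n) (\<lambda>w. (h q a + Sf h (\<delta> q a) w)^2) \<le> B^2 + B^2 * n"
    if a: "a \<in> \<Sigma>" for a
  proof -
    define r where "r = \<delta> q a"
    have r: "r \<in> Q" using a Suc.prems clos by (auto simp: r_def)
    have int: "integrable (measure_pmf (W n)) (Sf h r)"
      by (rule pmf_integrable_bdd) (rule bdW[OF r])
    have int2: "integrable (measure_pmf (W n)) (\<lambda>w. (Sf h r w)^2)"
      by (rule pmf_integrable_bdd) (rule bdW2[OF r])
    have IH: "measure_pmf.expectation (W n) (Sf h r) = 0" "measure_pmf.expectation (W n) (\<lambda>w. (Sf h r w)^2) \<le> B^2 * n"
      using Suc.IH[OF r] by auto
    have e1: "measure_pmf.expectation (W n) (\<lambda>w. h q a + Sf h r w) = h q a + measure_pmf.expectation (W n) (Sf h r)"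
      using int by (subst Bochner_Integration.integral_add) auto
    have "(\<lambda>w. (h q a + Sf h r w)^2) = (\<lambda>w. ((h q a)^2 + 2 * h q a * Sf h r w) + (Sf h r w)^2)"
      by (auto simp: power2_sum)
    hence e2: "measure_pmf.expectation (W n) (\<lambda>w. (h q a + Sf h r w)^2) =
       (h q a)^2 + 2 * h q a * measure_pmf.expectation (W n) (Sf h r) + measure_pmf.expectation (W n) (\<lambda>w. (Sf h r w)^2)"
      using int int2 by (simp add: Bochner_Integration.integral_add)
    have "(h q a)^2 \<le> B^2" using hb Suc.prems a by (metis abs_le_square_iff abs_of_nonneg B0)
    thus ?thesis using e1 e2 IH unfolding r_def[symmetric] by simp
  qed
  have bdS: "\<bar>Sf h q w\<bar> \<le> B * Suc n" if "w \<in> set_pmf (W (Suc n))" for w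
    using bdW[OF Suc.prems that] .
  have "measure_pmf.expectation (W (Suc n)) (Sf h q) =
     measure_pmf.expectation L (\<lambda>a. measure_pmf.expectation (W n) (\<lambda>w. h q a + Sf h (\<delta> q a) w))"
    by (subst E_W_Suc[OF bdS]) (auto intro!: integral_cong)
  also have "\<dots> = measure_pmf.expectation L (h q)"
    using step by (intro integral_cong_AE) (auto simp: AE_measure_pmf_iff set_L)
  also have "\<dots> = 0" using h0 Suc.prems by auto
  finally have E1: "measure_pmf.expectation (W (Suc n)) (Sf h q) = 0" .
  have "measure_pmf.expectation (W (Suc n)) (\<lambda>w. (Sf h q w)^2) =
     measure_pmf.expectation L (\<lambda>a. measure_pmf.expectation (W n) (\<lambda>w. (h q a + Sf h (\<delta> q a) w)^2))"
    by (subst E_W_Suc[OF bdW2[OF Suc.prems, where m="Suc n"]]) simp_all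
  also have "\<dots> \<le> B^2 + B^2 * n"
  proof (rule pmf_expectation_le[where B="(B * Suc n)^2"])
    fix a assume a: "a \<in> set_pmf L"
    thus "measure_pmf.expectation (W n) (\<lambda>w. (h q a + Sf h (\<delta> q a) w)^2) \<le> B^2 + B^2 * n"
      using step by (auto simp: set_L)
    show "\<bar>measure_pmf.expectation (W n) (\<lambda>w. (h q a + Sf h (\<delta> q a) w)^2)\<bar> \<le> (B * Suc n)^2"
    proof (rule pmf_expectation_abs_le)
      fix w assume w: "w \<in> set_pmf (W n)"
      have "a # w \<in> set_pmf (W (Suc n))" using a w by auto
      from bdW2[OF Suc.prems this] show "\<bar>(h q a + Sf h (\<delta> q a) w)^2\<bar> \<le> (B * Suc n)^2" by simp
    qed
  qed
  finally show ?case using E1 by (simp add: algebra_simps)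
qed

end



locale aut2 = aut \<Sigma> p Q \<delta> F for \<Sigma> :: "'a set" and p and Q :: "'q set" and \<delta> and F +
  assumes Fne: "F \<noteq> {}" and sc: "strongly_connected Q \<Sigma> \<delta>"
begin

fun tt :: "nat \<Rightarrow> 'q \<Rightarrow> real" where
  "tt 0 s = 0"
| "tt (Suc N) s = (if s \<in> F then 0 else 1 + measure_pmf.expectation L (\<lambda>a. tt N (\<delta> s a)))"

lemma tt_bnd: "0 \<le> tt N s \<and> tt N s \<le> N"
proof (induction N arbitrary: s)
  case 0 thus ?case by simp
next
  case (Suc N)
  have "0 \<le> measure_pmf.expectation L (\<lambda>a. tt N (\<delta> s a))"
    by (rule pmf_expectation_ge[where B=N]) (use Suc in auto)
  moreover have "measure_pmf.expectation L (\<lambda>a. tt N (\<delta> s a)) \<le> N"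
    by (rule pmf_expectation_le[where B=N]) (use Suc in auto)
  ultimately show ?case by auto
qed

lemma tt_int: "integrable (measure_pmf L) (\<lambda>a. tt N (g a))"
  by (rule pmf_integrable_bdd[where B=N]) (use tt_bnd in auto)

lemma tt_mono: "tt N s \<le> tt (Suc N) s"
proof (induction N arbitrary: s)
  case 0 thus ?case using tt_bnd[of "Suc 0" s] by simp
next
  case (Suc N)
  have "measure_pmf.expectation L (\<lambda>a. tt N (\<delta> s a)) \<le> measure_pmf.expectation L (\<lambda>a. tt (Suc N) (\<delta> s a))"
    by (intro integral_mono tt_int Suc.IH)
  thus ?case by simp
qed

definition Ed where "Ed = {(r, \<delta> r a) | r a. r \<in> Q \<and> a \<in> \<Sigma>}"

lemma Ed_sub: "Ed \<subseteq> Q \<times> Q" using clos by (auto simp: Ed_def)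

lemma fin_Ed: "finite Ed" using Ed_sub finQ by (meson finite_SigmaI finite_subset)

lemma tt_bounded: "\<exists>A\<ge>0. \<forall>N. \<forall>s\<in>Q. tt N s \<le> A"
proof -
  have "\<forall>e\<in>Ed. \<exists>c\<in>\<Sigma>. fst e \<in> Q \<and> \<delta> (fst e) c = snd e" by (auto simp: Ed_def)
  then obtain g where g: "\<forall>e\<in>Ed. g e \<in> \<Sigma> \<and> fst e \<in> Q \<and> \<delta> (fst e) (g e) = snd e" by metis
  define \<pi> where "\<pi> = Min (insert (1/2) ((\<lambda>e. p (g e)) ` Ed))"
  have fin: "finite (insert (1/2) ((\<lambda>e. p (g e)) ` Ed))" using fin_Ed by simp
  have \<pi>pos: "0 < \<pi>" unfolding \<pi>_def using fin g pos by (subst Min_gr_iff) auto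
  have \<pi>half: "\<pi> \<le> 1/2" unfolding \<pi>_def using fin by (intro Min_le) auto
  have \<pi>le: "\<pi> \<le> p (g e)" if "e \<in> Ed" for e unfolding \<pi>_def using fin that by simp
  have edge: "\<exists>c\<in>\<Sigma>. \<delta> r c = t \<and> \<pi> \<le> p c" if "(r, t) \<in> Ed" for r t
    using g \<pi>le[OF that] that by force
  obtain f0 where f0: "f0 \<in> F" using Fne by auto
  have "\<forall>s\<in>Q. \<exists>k. \<exists>f\<in>F. (s, f) \<in> Ed ^^ k"
  proof
    fix s assume "s \<in> Q"
    hence "(s, f0) \<in> Ed\<^sup>*" using sc f0 FQ unfolding strongly_connected_def Ed_def by auto
    thus "\<exists>k. \<exists>f\<in>F. (s, f) \<in> Ed ^^ k" using f0 by (meson rtrancl_power)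
  qed
  then obtain ks where ks: "\<forall>s\<in>Q. \<exists>f\<in>F. (s, f) \<in> Ed ^^ ks s" by metis
  define K where "K = Max (ks ` Q)"
  have ksK: "ks s \<le> K" if "s \<in> Q" for s unfolding K_def using finQ that by simp
  define A where "A = 1 / ((1 - \<pi>) * \<pi>^K)"
  have A0: "0 \<le> A" unfolding A_def using \<pi>pos \<pi>half by simp
  define a where "a k = (1 - \<pi>^k) / (1 - \<pi>) + A * (1 - \<pi>^k)" for k :: nat
  have a0: "0 \<le> a k" for k
  proof -
    have "\<pi>^k \<le> 1" using \<pi>pos \<pi>half by (simp add: power_le_one)
    thus ?thesis unfolding a_def using \<pi>half A0 by simp
  qed
  have aZ: "a 0 = 0" unfolding a_def by simp
  have aS: "a (Suc k) = 1 + \<pi> * a k + (1 - \<pi>) * A" for k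
    unfolding a_def using \<pi>half by (simp add: field_simps)
  have aA: "a k \<le> A" if "k \<le> K" for k
  proof -
    have pk: "\<pi>^K \<le> \<pi>^k" using that \<pi>pos \<pi>half by (intro power_decreasing) auto
    have "(1 - \<pi>^k) / (1 - \<pi>) \<le> 1 / (1 - \<pi>)" using \<pi>pos \<pi>half by (simp add: divide_right_mono)
    also have "\<dots> = A * \<pi>^K" unfolding A_def using \<pi>pos \<pi>half by simp
    also have "\<dots> \<le> A * \<pi>^k" using pk A0 by (simp add: mult_left_mono)
    finally show ?thesis unfolding a_def by (simp add: algebra_simps)
  qed
  have main: "\<forall>k s. s \<in> Q \<longrightarrow> (\<exists>f\<in>F. (s, f) \<in> Ed ^^ k) \<longrightarrow> k \<le> K \<longrightarrow> tt N s \<le> a k" for N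
  proof (induction N)
    case 0 thus ?case using a0 by simp
  next
    case (Suc N)
    have allA: "tt N s \<le> A" if "s \<in> Q" for s
      using Suc.IH ks that ksK aA by (meson order.trans)
    show ?case
    proof (intro allI impI)
      fix k s assume s: "s \<in> Q" and ex: "\<exists>f\<in>F. (s, f) \<in> Ed ^^ k" and kK: "k \<le> K"
      show "tt (Suc N) s \<le> a k"
      proof (cases "s \<in> F")
        case True thus ?thesis using a0 by simp
      next
        case sF: False
        then obtain j where kj: "k = Suc j" using ex by (cases k) auto
        from ex obtain f y where f: "f \<in> F" "(s, y) \<in> Ed" "(y, f) \<in> Ed ^^ j"
          unfolding kj by (meson relpow_Suc_D2)
        obtain c where c: "c \<in> \<Sigma>" "\<delta> s c = y" "\<pi> \<le> p c" using edge[OF f(2)] by auto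
        have y: "y \<in> Q" using f(2) Ed_sub by auto
        have "j \<le> K" using kK kj by simp
        hence tty: "tt N y \<le> a j" using Suc.IH y f by blast
        have ptw: "tt N (\<delta> s b) \<le> A + (a j - A) * indicator {c} b" if "b \<in> set_pmf L" for b
          using that s clos allA tty c by (auto simp: set_L indicator_def)
        have "measure_pmf.expectation L (\<lambda>b. tt N (\<delta> s b)) \<le> measure_pmf.expectation L (\<lambda>b. A + (a j - A) * indicator {c} b)"
        proof (intro integral_mono_AE tt_int)
          show "integrable (measure_pmf L) (\<lambda>b. A + (a j - A) * indicator {c} b)"
            by (rule pmf_integrable_bdd[where B="\<bar>A\<bar> + \<bar>a j - A\<bar>"]) (auto simp: indicator_def)
        qed (auto simp: AE_measure_pmf_iff ptw)
        also have "\<dots> = A + (a j - A) * p c"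
        proof -
          have i1: "integrable (measure_pmf L) (\<lambda>b. (a j - A) * indicator {c} b)"
            by (rule pmf_integrable_bdd[where B="\<bar>a j - A\<bar>"]) (auto simp: indicator_def)
          have "measure_pmf.expectation L (\<lambda>b. A + (a j - A) * indicator {c} b)
              = measure_pmf.expectation L (\<lambda>b. A) + measure_pmf.expectation L (\<lambda>b. (a j - A) * indicator {c} b)"
            by (rule Bochner_Integration.integral_add) (simp, rule i1)
          also have "measure_pmf.expectation L (\<lambda>b. (a j - A) * indicator {c} b) = (a j - A) * measure_pmf.prob L {c}"
            by simp
          finally show ?thesis using c by (simp add: measure_pmf_single pmf_L pp_def)
        qed
        also have "\<dots> \<le> A + (a j - A) * \<pi>"
          using aA[of j] kK kj c by (intro add_left_mono mult_left_mono_neg) auto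
        finally have E: "measure_pmf.expectation L (\<lambda>b. tt N (\<delta> s b)) \<le> A + (a j - A) * \<pi>" .
        have E2: "measure_pmf.expectation L (\<lambda>b. tt N (\<delta> s b)) \<le> A + \<pi> * a j - \<pi> * A"
          using E by (simp add: algebra_simps)
        have tS: "tt (Suc N) s = 1 + measure_pmf.expectation L (\<lambda>b. tt N (\<delta> s b))" using sF by simp
        have "a k = 1 + \<pi> * a j + A - \<pi> * A" using aS[of j] kj by (simp add: algebra_simps)
        thus ?thesis using tS E2 by linarith
      qed
    qed
  qed
  show ?thesis
  proof (intro exI[of _ A] conjI allI ballI A0)
    fix N s assume s: "s \<in> Q"
    then obtain f where "f \<in> F" "(s, f) \<in> Ed ^^ ks s" using ks by auto
    hence "tt N s \<le> a (ks s)" using main[of N] s ksK by blast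
    thus "tt N s \<le> A" using aA ksK s by (meson order.trans)
  qed
qed

lemma tt_exists_N: "\<exists>N. \<forall>s\<in>Q. tt (Suc N) s \<le> tt N s + 1/2"
proof (rule ccontr)
  assume "\<not> ?thesis"
  hence nn: "\<forall>N. \<exists>s\<in>Q. tt (Suc N) s > tt N s + 1/2" by (auto simp: not_le)
  obtain A where A: "\<forall>N. \<forall>s\<in>Q. tt N s \<le> A" using tt_bounded by auto
  have grow: "real N / 2 \<le> (\<Sum>s\<in>Q. tt N s)" for N
  proof (induction N)
    case 0 thus ?case using tt_bnd by (simp add: sum_nonneg)
  next
    case (Suc N)
    obtain s0 where s0: "s0 \<in> Q" "tt (Suc N) s0 > tt N s0 + 1/2" using nn by auto
    have "(\<Sum>s\<in>Q. tt (Suc N) s) = (\<Sum>s\<in>Q. tt N s) + (\<Sum>s\<in>Q. tt (Suc N) s - tt N s)"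
      by (simp add: sum_subtractf)
    moreover have "tt (Suc N) s0 - tt N s0 \<le> (\<Sum>s\<in>Q. tt (Suc N) s - tt N s)"
      by (rule member_le_sum) (use s0 finQ tt_mono in auto)
    ultimately show ?case using Suc s0 by simp
  qed
  define N where "N = nat (ceiling (2 * card Q * A)) + 1"
  have "(\<Sum>s\<in>Q. tt N s) \<le> (\<Sum>s\<in>Q. A)" using A by (intro sum_mono) auto
  hence "real N / 2 \<le> card Q * A" using grow[of N] by simp
  moreover have "2 * card Q * A < real N" unfolding N_def by linarith
  ultimately show False by simp
qed

end



context aut2 begin

lemma len_sel_Cons: "length (sel_sub \<delta> F q (a # w)) = (if q \<in> F then 1 else 0) + length (sel_sub \<delta> F (\<delta> q a) w)"
  by simp

definition hc :: "'a \<Rightarrow> 'q \<Rightarrow> 'a \<Rightarrow> real" where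
  "hc c s a = (if s \<in> F then (if a = c then 1 else 0) - p c else 0)"

lemma Sf_hc: "Sf (hc c) q w = real (count_list (sel_sub \<delta> F q w) c) - p c * real (length (sel_sub \<delta> F q w))"
  by (induction w arbitrary: q) (auto simp: hc_def algebra_simps)

lemma hc_bound: "c \<in> \<Sigma> \<Longrightarrow> \<forall>s\<in>Q. \<forall>a\<in>\<Sigma>. \<bar>hc c s a\<bar> \<le> 1"
  using pos by (auto simp: hc_def)

lemma hc_mean: assumes c: "c \<in> \<Sigma>" shows "\<forall>s\<in>Q. measure_pmf.expectation L (hc c s) = 0"
proof
  fix s assume "s \<in> Q"
  show "measure_pmf.expectation L (hc c s) = 0"
  proof (cases "s \<in> F")
    case False
    hence "hc c s = (\<lambda>a. 0)" by (auto simp: hc_def)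
    thus ?thesis by simp
  next
    case True
    have ii: "integrable (measure_pmf L) (indicator {c} :: 'a \<Rightarrow> real)"
      by (rule pmf_integrable_bdd[where B=1]) (auto simp: indicator_def)
    have "hc c s = (\<lambda>a. indicator {c} a - p c)" using True by (auto simp: hc_def indicator_def)
    moreover have "measure_pmf.expectation L (\<lambda>a. indicator {c} a - p c) = pmf L c - p c"
      by (subst Bochner_Integration.integral_diff) (auto simp: measure_pmf_single ii)
    ultimately show ?thesis using c by (simp add: pmf_L pp_def)
  qed
qed

lemma hc_moment: assumes c: "c \<in> \<Sigma>" shows "q \<in> Q \<Longrightarrow> measure_pmf.expectation (W n) (\<lambda>w. (Sf (hc c) q w)^2) \<le> n"
  using Sf_moments[OF hc_bound[OF c] hc_mean[OF c] zero_le_one, of q n] by simp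

end

locale aut3 = aut2 \<Sigma> p Q \<delta> F for \<Sigma> :: "'a set" and p and Q :: "'q set" and \<delta> and F +
  fixes N0 A
  assumes N0: "\<forall>s\<in>Q. tt (Suc N0) s \<le> tt N0 s + 1/2"
    and A0: "0 \<le> A" and A: "\<forall>N. \<forall>s\<in>Q. tt N s \<le> A"
begin

abbreviation T where "T \<equiv> tt N0"

definition ET where "ET s = measure_pmf.expectation L (\<lambda>b. T (\<delta> s b))"

lemma ET_bnd: "s \<in> Q \<Longrightarrow> 0 \<le> ET s \<and> ET s \<le> A"
proof -
  assume s: "s \<in> Q"
  have "0 \<le> ET s" unfolding ET_def
    by (rule pmf_expectation_ge[where B=N0]) (use tt_bnd in auto)
  moreover have "ET s \<le> A" unfolding ET_def
    by (rule pmf_expectation_le[where B=N0]) (use tt_bnd A s clos in \<open>auto simp: set_L\<close>)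
  ultimately show ?thesis by simp
qed

lemma ET_drift: "s \<in> Q \<Longrightarrow> s \<notin> F \<Longrightarrow> ET s \<le> T s - 1/2"
  using N0 by (auto simp: ET_def)

definition h1 where "h1 s a = T (\<delta> s a) - ET s"

lemma h1_bound: "\<forall>s\<in>Q. \<forall>a\<in>\<Sigma>. \<bar>h1 s a\<bar> \<le> A"
proof (intro ballI)
  fix s a assume s: "s \<in> Q" and a: "a \<in> \<Sigma>"
  have "0 \<le> T (\<delta> s a)" "T (\<delta> s a) \<le> A" using tt_bnd A s a clos by auto
  thus "\<bar>h1 s a\<bar> \<le> A" using ET_bnd[OF s] unfolding h1_def by linarith
qed

lemma h1_mean: "\<forall>s\<in>Q. measure_pmf.expectation L (h1 s) = 0"
proof
  fix s assume "s \<in> Q"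
  have "measure_pmf.expectation L (\<lambda>a. T (\<delta> s a) - ET s) = ET s - ET s"
    by (subst Bochner_Integration.integral_diff) (auto simp: tt_int ET_def)
  thus "measure_pmf.expectation L (h1 s) = 0" by (simp add: h1_def[abs_def])
qed

lemma h1_moment: "q \<in> Q \<Longrightarrow> measure_pmf.expectation (W n) (\<lambda>w. (Sf h1 q w)^2) \<le> A^2 * n"
  using Sf_moments[OF h1_bound h1_mean A0, of q n] by simp

lemma visits: "q \<in> Q \<Longrightarrow> set w \<subseteq> \<Sigma> \<Longrightarrow>
   Sf h1 q w \<ge> T (dfa_run \<delta> q w) - T q + real (length w) / 2 - (A + 1/2) * real (length (sel_sub \<delta> F q w))"
proof (induction w arbitrary: q)
  case Nil thus ?case by simp
next
  case (Cons a w)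
  have a: "a \<in> \<Sigma>" and w: "set w \<subseteq> \<Sigma>" using Cons.prems by auto
  have r: "\<delta> q a \<in> Q" using clos Cons.prems a by auto
  have IH: "Sf h1 (\<delta> q a) w \<ge> T (dfa_run \<delta> (\<delta> q a) w) - T (\<delta> q a) + real (length w) / 2 - (A + 1/2) * real (length (sel_sub \<delta> F (\<delta> q a) w))"
    using Cons.IH[OF r w] .
  have key: "- ET q \<ge> - T q + 1/2 - (A + 1/2) * (if q \<in> F then 1 else 0)"
  proof (cases "q \<in> F")
    case True thus ?thesis using ET_bnd[OF Cons.prems(1)] tt_bnd[of N0 q] by simp
  next
    case False thus ?thesis using ET_drift[OF Cons.prems(1)] by simp
  qed
  have L: "real (length (sel_sub \<delta> F q (a # w))) = (if q \<in> F then 1 else 0) + real (length (sel_sub \<delta> F (\<delta> q a) w))"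
    by simp
  have S: "Sf h1 q (a # w) = T (\<delta> q a) - ET q + Sf h1 (\<delta> q a) w" by (simp add: h1_def)
  have R: "dfa_run \<delta> q (a # w) = dfa_run \<delta> (\<delta> q a) w" by simp
  have n: "real (length (a # w)) / 2 = 1/2 + real (length w) / 2" by simp
  have d: "(A + 1/2) * ((if q \<in> F then 1 else 0) + real (length (sel_sub \<delta> F (\<delta> q a) w)))
     = (A + 1/2) * (if q \<in> F then 1 else 0) + (A + 1/2) * real (length (sel_sub \<delta> F (\<delta> q a) w))"
    by (simp only: distrib_left)
  show ?case unfolding S R L d n using IH key by linarith
qed

end



lemma arith_in:
  fixes x pc len k r :: real
  assumes "len > 0" "\<bar>x - pc * len\<bar> \<le> k" "k \<le> r * len"
  shows "\<bar>x / len - pc\<bar> \<le> r"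
proof -
  have "x / len - pc = (x - pc * len) / len" using assms(1) by (simp add: field_simps)
  hence "\<bar>x / len - pc\<bar> = \<bar>x - pc * len\<bar> / len" using assms(1) by simp
  also have "\<dots> \<le> r" using assms by (simp add: divide_le_eq)
  finally show ?thesis .
qed

lemma arith_out:
  fixes cnt s len P k e pa :: real
  assumes "len > 0" "cnt \<ge> 0" "cnt + s \<le> len" "s \<ge> len * P - k" "1 - P \<le> e/4"
    "k \<le> len * (e/4)" "0 \<le> pa" "pa + P \<le> 1" "e > 0"
  shows "\<bar>cnt / len - pa\<bar> \<le> e/2"
proof -
  have "len * (1 - P) \<le> len * (e/4)" using assms by (intro mult_left_mono) auto
  hence "cnt \<le> len * (e/4) + len * (e/4)" using assms by (simp add: algebra_simps)
  hence c: "cnt \<le> (e/2) * len" by (simp add: algebra_simps)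
  have "cnt / len \<le> e/2" using c assms(1) by (simp add: divide_le_eq)
  moreover have "0 \<le> cnt / len" using assms by simp
  moreover have "pa \<le> e/4" using assms by linarith
  ultimately have "cnt / len - pa \<le> e/2" "- (cnt / len - pa) \<le> e/2" using assms by linarith+
  thus ?thesis by (rule abs_leI)
qed

context aut3 begin

lemma Sigma_ne: "\<Sigma> \<noteq> {}"
proof
  assume "\<Sigma> = {}"
  hence "(p has_sum 0) \<Sigma>" by simp
  with hs show False using has_sum_unique by fastforce
qed

lemma psum_le1: "finite X \<Longrightarrow> X \<subseteq> \<Sigma> \<Longrightarrow> sum p X \<le> 1"
  by (rule has_sum_mono_neutral[OF has_sum_finite hs]) (use pos in \<open>auto simp: less_imp_le\<close>)

lemma main_aut3:
  fixes \<epsilon> :: real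
  assumes \<epsilon>: "\<epsilon> > 0"
  shows "(\<lambda>n. mu_p p (D \<Sigma> p Q \<delta> F n (1 / (8*A+4)) \<epsilon>)) \<longlonglongrightarrow> 1"
proof -
  define b where "b = 1 / (8*A+4)"
  have b0: "0 < b" unfolding b_def using A0 by simp
  have "(sum p \<longlongrightarrow> 1) (finite_subsets_at_top \<Sigma>)" using hs by (simp add: has_sum_def)
  hence "eventually (\<lambda>X. dist (sum p X) 1 < \<epsilon>/4) (finite_subsets_at_top \<Sigma>)"
    using \<epsilon> by (intro tendstoD) auto
  then obtain S where S: "finite S" "S \<subseteq> \<Sigma>" "dist (sum p S) 1 < \<epsilon>/4"
    unfolding eventually_finite_subsets_at_top by blast
  have "\<bar>sum p S - 1\<bar> < \<epsilon>/4" using S(3) by (simp add: dist_real_def)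
  moreover have "- (sum p S - 1) \<le> \<bar>sum p S - 1\<bar>" by (rule abs_ge_minus_self)
  ultimately have pS: "1 - sum p S \<le> \<epsilon>/4" by linarith
  define \<eta> where "\<eta> = \<epsilon> * b / (4 * (card S + 1))"
  have \<eta>0: "0 < \<eta>" unfolding \<eta>_def using \<epsilon> b0 by simp
  have \<eta>b: "\<eta> / b = \<epsilon> / (4 * (card S + 1))" unfolding \<eta>_def using b0 by simp
  have \<eta>b1: "\<eta> / b \<le> \<epsilon>/4" unfolding \<eta>b using \<epsilon> by (simp add: field_simps)
  have \<eta>b2: "card S * (\<eta> / b) \<le> \<epsilon>/4" unfolding \<eta>b using \<epsilon> by (simp add: field_simps)
  define K where "K = card Q * (16 * A^2 + card S / \<eta>^2)"
  define Bad where "Bad n q = {w. \<bar>Sf h1 q w\<bar> \<ge> real n / 4} \<union> (\<Union>c\<in>S. {w. \<bar>Sf (hc c) q w\<bar> \<ge> \<eta> * n})" for n q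
  define Bad' where "Bad' n = (\<Union>q\<in>Q. Bad n q) \<union> (- set_pmf (W n))" for n
  have probBad: "measure_pmf.prob (W n) (Bad' n) \<le> K / n" if n1: "n \<ge> 1" for n
  proof -
    have np: "real n > 0" using n1 by simp
    have c1: "measure_pmf.prob (W n) {w. \<bar>Sf h1 q w\<bar> \<ge> real n / 4} \<le> 16 * A^2 / n" if q: "q \<in> Q" for q
    proof -
      have "measure_pmf.prob (W n) {w. \<bar>Sf h1 q w\<bar> \<ge> real n / 4} \<le> measure_pmf.expectation (W n) (\<lambda>w. (Sf h1 q w)^2) / (real n / 4)^2"
        by (rule pmf_chebyshev[where B="A * n"]) (use Sf_bound[OF h1_bound q] set_WD np in auto)
      also have "\<dots> \<le> (A^2 * n) / (real n / 4)^2"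
        using h1_moment[OF q, of n] by (intro divide_right_mono) auto
      also have "\<dots> = 16 * A^2 / n" using np by (simp add: field_simps power2_eq_square)
      finally show ?thesis .
    qed
    have c2: "measure_pmf.prob (W n) {w. \<bar>Sf (hc c) q w\<bar> \<ge> \<eta> * n} \<le> 1 / (\<eta>^2 * n)" if q: "q \<in> Q" and c: "c \<in> S" for q c
    proof -
      have cS: "c \<in> \<Sigma>" using c S by auto
      have "measure_pmf.prob (W n) {w. \<bar>Sf (hc c) q w\<bar> \<ge> \<eta> * n} \<le> measure_pmf.expectation (W n) (\<lambda>w. (Sf (hc c) q w)^2) / (\<eta> * n)^2"
        by (rule pmf_chebyshev[where B="n"]) (use Sf_bound[OF hc_bound[OF cS] q] set_WD np \<eta>0 in auto)
      also have "\<dots> \<le> n / (\<eta> * n)^2"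
        using hc_moment[OF cS q, of n] by (intro divide_right_mono) auto
      also have "\<dots> = 1 / (\<eta>^2 * n)" using np \<eta>0 by (simp add: field_simps power2_eq_square)
      finally show ?thesis .
    qed
    have bq: "measure_pmf.prob (W n) (Bad n q) \<le> 16 * A^2 / n + card S / (\<eta>^2 * n)" if q: "q \<in> Q" for q
    proof -
      have "measure_pmf.prob (W n) (Bad n q) \<le> measure_pmf.prob (W n) {w. \<bar>Sf h1 q w\<bar> \<ge> real n / 4}
         + measure_pmf.prob (W n) (\<Union>c\<in>S. {w. \<bar>Sf (hc c) q w\<bar> \<ge> \<eta> * n})"
        unfolding Bad_def by (rule measure_Un_le) auto
      also have "measure_pmf.prob (W n) (\<Union>c\<in>S. {w. \<bar>Sf (hc c) q w\<bar> \<ge> \<eta> * n}) \<le> (\<Sum>c\<in>S. measure_pmf.prob (W n) {w. \<bar>Sf (hc c) q w\<bar> \<ge> \<eta> * n})"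
        by (rule measure_pmf.finite_measure_subadditive_finite) (use S in auto)
      also have "\<dots> \<le> (\<Sum>c\<in>S. 1 / (\<eta>^2 * n))" by (rule sum_mono) (use c2 q in auto)
      also have "\<dots> = card S / (\<eta>^2 * n)" by simp
      finally show ?thesis using c1[OF q] by linarith
    qed
    have z: "measure_pmf.prob (W n) (- set_pmf (W n)) = 0"
      unfolding measure_pmf_conv_infsetsum by (rule infsetsum_all_0) (simp add: set_pmf_eq)
    have "measure_pmf.prob (W n) (Bad' n) \<le> measure_pmf.prob (W n) (\<Union>q\<in>Q. Bad n q) + measure_pmf.prob (W n) (- set_pmf (W n))"
      unfolding Bad'_def by (rule measure_Un_le) auto
    also have "\<dots> = measure_pmf.prob (W n) (\<Union>q\<in>Q. Bad n q)" using z by simp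
    also have "\<dots> \<le> (\<Sum>q\<in>Q. measure_pmf.prob (W n) (Bad n q))"
      by (rule measure_pmf.finite_measure_subadditive_finite) (use finQ in auto)
    also have "\<dots> \<le> (\<Sum>q\<in>Q. 16 * A^2 / n + card S / (\<eta>^2 * n))" by (rule sum_mono) (use bq in auto)
    also have "\<dots> = K / n" unfolding K_def using np by (simp add: field_simps)
    finally show ?thesis .
  qed
  have good: "- Bad' n \<subseteq> D \<Sigma> p Q \<delta> F n b \<epsilon>" if n1: "n \<ge> 1" and nA: "8 * A \<le> real n" for n
  proof
    fix w assume "w \<in> - Bad' n"
    hence wW: "w \<in> set_pmf (W n)" and wB: "\<forall>q\<in>Q. w \<notin> Bad n q" unfolding Bad'_def by auto
    have wl: "length w = n" "set w \<subseteq> \<Sigma>" using set_WD[OF wW] by auto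
    have np: "real n > 0" using n1 by simp
    have inDq: "w \<in> D_q \<Sigma> p \<delta> F n b \<epsilon> q" if q: "q \<in> Q" for q
    proof -
      define l where "l = sel_sub \<delta> F q w"
      define len where "len = real (length l)"
      have s1: "\<bar>Sf h1 q w\<bar> < real n / 4" and s2: "\<forall>c\<in>S. \<bar>Sf (hc c) q w\<bar> < \<eta> * n"
        using wB q unfolding Bad_def by (auto simp: not_le)
      have vis: "Sf h1 q w \<ge> T (dfa_run \<delta> q w) - T q + real n / 2 - (A + 1/2) * len"
        using visits[OF q wl(2)] wl(1) unfolding len_def l_def by simp
      have "0 \<le> T (dfa_run \<delta> q w)" "T q \<le> A" using tt_bnd A q by auto
      hence "(A + 1/2) * len > real n / 8" using vis s1 nA by linarith
      hence "real n < len * (8*A+4)" by (simp add: algebra_simps)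
      hence bn: "b * n < len" unfolding b_def using A0 by (simp add: field_simps)
      have lenp: "len > 0" using bn b0 np by (smt (verit) mult_pos_pos)
      have ebn: "\<eta> * n \<le> (\<eta> / b) * len"
      proof -
        have "\<eta> * n = (\<eta> / b) * (b * n)" using b0 by simp
        also have "\<dots> \<le> (\<eta> / b) * len" using bn b0 \<eta>0 by (intro mult_left_mono) auto
        finally show ?thesis .
      qed
      have cnt_c: "\<bar>real (count_list l c) - p c * len\<bar> \<le> \<eta> * n" if c: "c \<in> S" for c
        using s2 c Sf_hc[of c q w] unfolding l_def len_def by force
      have fr: "\<bar>real (count_list l a) / len - p a\<bar> \<le> \<epsilon>/2" if a: "a \<in> \<Sigma>" for a
      proof (cases "a \<in> S")
        case True
        have "\<bar>real (count_list l a) / len - p a\<bar> \<le> \<eta> / b"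
          by (rule arith_in[OF lenp cnt_c[OF True] ebn])
        thus ?thesis using \<eta>b1 \<epsilon> by linarith
      next
        case False
        have "(\<Sum>c\<in>insert a S. count_list l c) \<le> length l" by (rule sum_count_list_le) (use S in simp)
        hence "count_list l a + (\<Sum>c\<in>S. count_list l c) \<le> length l" using False S by simp
        hence cs: "real (count_list l a) + (\<Sum>c\<in>S. real (count_list l c)) \<le> len"
          unfolding len_def by (metis of_nat_add of_nat_le_iff of_nat_sum)
        have "(\<Sum>c\<in>S. real (count_list l c)) \<ge> (\<Sum>c\<in>S. p c * len - \<eta> * n)"
        proof (rule sum_mono)
          fix c assume c: "c \<in> S"
          have "- (real (count_list l c) - p c * len) \<le> \<eta> * n"
            using cnt_c[OF c] abs_ge_minus_self order_trans by blast
          thus "p c * len - \<eta> * n \<le> real (count_list l c)" by linarith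
        qed
        also have "(\<Sum>c\<in>S. p c * len - \<eta> * n) = len * sum p S - card S * \<eta> * n"
          by (simp add: sum_subtractf sum_distrib_left sum_distrib_right algebra_simps)
        finally have lo: "(\<Sum>c\<in>S. real (count_list l c)) \<ge> len * sum p S - card S * \<eta> * n" .
        have k: "card S * \<eta> * n \<le> len * (\<epsilon>/4)"
        proof -
          have "card S * \<eta> * n = card S * (\<eta> * n)" by simp
          also have "\<dots> \<le> card S * ((\<eta> / b) * len)" using ebn by (intro mult_left_mono) auto
          also have "\<dots> = (card S * (\<eta> / b)) * len" by simp
          also have "\<dots> \<le> (\<epsilon>/4) * len" using \<eta>b2 lenp by (intro mult_right_mono) auto
          finally show ?thesis by (simp add: mult.commute)
        qed
        have pa: "p a + sum p S \<le> 1" using psum_le1[of "insert a S"] S False a by simp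
        show ?thesis
          by (rule arith_out[OF lenp _ cs lo pS k _ pa \<epsilon>]) (use pos a in auto)
      qed
      have "(SUP a\<in>\<Sigma>. \<bar>real (count_list l a) / len - p a\<bar>) \<le> \<epsilon>/2"
        by (rule cSUP_least) (use Sigma_ne fr in auto)
      hence sup: "(SUP a\<in>\<Sigma>. \<bar>real (count_list l a) / len - p a\<bar>) < \<epsilon>" using \<epsilon> by linarith
      show ?thesis unfolding D_q_def using wl bn sup unfolding l_def len_def by auto
    qed
    show "w \<in> D \<Sigma> p Q \<delta> F n b \<epsilon>" unfolding D_def using wl inDq by auto
  qed
  have ev: "eventually (\<lambda>n. 1 - K / real n \<le> mu_p p (D \<Sigma> p Q \<delta> F n b \<epsilon>) \<and> mu_p p (D \<Sigma> p Q \<delta> F n b \<epsilon>) \<le> 1) sequentially"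
  proof (rule eventually_sequentiallyI[of "nat \<lceil>8 * A\<rceil> + 1"])
    fix n assume n: "nat \<lceil>8 * A\<rceil> + 1 \<le> n"
    have n1: "n \<ge> 1" using n by simp
    have nA: "8 * A \<le> real n" using n by linarith
    have mu: "mu_p p (D \<Sigma> p Q \<delta> F n b \<epsilon>) = measure_pmf.prob (W n) (D \<Sigma> p Q \<delta> F n b \<epsilon>)"
      by (rule mu_p_W) (auto simp: D_def)
    have "1 - K / real n \<le> 1 - measure_pmf.prob (W n) (Bad' n)" using probBad[OF n1] by simp
    also have "\<dots> = measure_pmf.prob (W n) (space (measure_pmf (W n)) - Bad' n)"
      by (subst measure_pmf.prob_compl) auto
    also have "\<dots> \<le> measure_pmf.prob (W n) (D \<Sigma> p Q \<delta> F n b \<epsilon>)"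
      using good[OF n1 nA] by (intro measure_pmf.finite_measure_mono) auto
    finally show "1 - K / real n \<le> mu_p p (D \<Sigma> p Q \<delta> F n b \<epsilon>) \<and> mu_p p (D \<Sigma> p Q \<delta> F n b \<epsilon>) \<le> 1"
      using mu by simp
  qed
  have l1: "(\<lambda>n. 1 - K / real n) \<longlonglongrightarrow> 1"
    using tendsto_diff[OF tendsto_const lim_const_over_n[of K]] by simp
  have "(\<lambda>n. mu_p p (D \<Sigma> p Q \<delta> F n b \<epsilon>)) \<longlonglongrightarrow> 1"
    by (rule tendsto_sandwich[OF _ _ l1 tendsto_const]) (use ev in \<open>auto elim: eventually_mono\<close>)
  thus ?thesis unfolding b_def .
qed

end

theorem lemma5p7:
  fixes \<Sigma> :: "'a set" and p :: "'a \<Rightarrow> real"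
    and Q :: "'q set" and \<delta> :: "'q \<Rightarrow> 'a \<Rightarrow> 'q" and q\<^sub>s :: 'q and F :: "'q set"
  assumes "\<Sigma> \<noteq> {}" and "countable \<Sigma>"
    and "\<forall>a\<in>\<Sigma>. 0 < p a \<and> p a \<le> 1"
    and "(p has_sum 1) \<Sigma>"
    and "finite Q" and "\<forall>q\<in>Q. \<forall>a\<in>\<Sigma>. \<delta> q a \<in> Q"
    and "q\<^sub>s \<in> Q" and "F \<subseteq> Q" and "F \<noteq> {}"
    and "strongly_connected Q \<Sigma> \<delta>"
  shows "\<exists>b::real. 0 < b \<and> b \<le> 1 \<and>
           (\<forall>\<epsilon>>0. (\<lambda>n. mu_p p (D \<Sigma> p Q \<delta> F n b \<epsilon>)) \<longlonglongrightarrow> 1)"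
proof -
  interpret aut2 \<Sigma> p Q \<delta> F
    by unfold_locales (use assms in auto)
  obtain N0 where N0: "\<forall>s\<in>Q. tt (Suc N0) s \<le> tt N0 s + 1/2" using tt_exists_N by auto
  obtain A where Ab: "0 \<le> A" "\<forall>N. \<forall>s\<in>Q. tt N s \<le> A" using tt_bounded by auto
  interpret aut3 \<Sigma> p Q \<delta> F N0 A
    by unfold_locales (use N0 Ab in auto)
  show ?thesis
  proof (intro exI[of _ "1 / (8*A+4)"] conjI allI impI)
    show "0 < 1 / (8*A+4)" using Ab by simp
    show "1 / (8*A+4) \<le> 1" using Ab by simp
    fix \<epsilon> :: real assume "\<epsilon> > 0"
    thus "(\<lambda>n. mu_p p (D \<Sigma> p Q \<delta> F n (1 / (8*A+4)) \<epsilon>)) \<longlonglongrightarrow> 1" by (rule main_aut3)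
  qed
qed

end
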